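(* Let all hypotheses of the following setting hold: $(\Omega,\mathcal{F},P)$ is a probability space, $(\mathcal{F}_n)_{n\ge1}$ an increasing sequence of sub-$\sigma$-algebras of $\mathcal{F}$; $X_n$ are $\mathcal{F}_n$-measurable real random variables, $T_n$ are $\mathcal{F}_n$-measurable real random variables, $W_n$ are $\mathcal{F}_{n+1}$-measurable real random variables with $X_{n+1}=T_n+W_n$, $\mathbb{E}[W_n\mid\mathcal{F}_n]=0$ a.s., and $\sum_{n}\mathbb{E}[W_n^2]<\infty$; $\alpha_n,\beta_n,\gamma_n:\Omega\to\mathbb{R}$ are nonnegative functions such that almost surely $\alpha_n\to0$, $\sum_n\beta_n<\infty$ and $\sum_n\gamma_n=\infty$. Suppose that for some $x_*\in\mathbb{R}$, for all $n\ge1$ and all $\omega\in\Omega$, $$|T_n(\omega)-x_*|\le\max\big(\alpha_n(\omega),\,(1+\beta_n(\omega)-\gamma_n(\omega))|X_n(\omega)-x_*|\big).$$ Then $X_n\to x_*$ almost surely.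
   Context: $\mathbb{E}[\,\cdot\mid\mathcal{F}_n]$ denotes conditional expectation with respect to $\mathcal{F}_n$. *)

theory Defs
  imports "HOL-Probability.Probability"
begin

end

theory Submission
  imports Defs
begin

lemma det_bounded:
  fixes e u b \<beta> :: "nat \<Rightarrow> real" and A :: "nat \<Rightarrow> bool"
  assumes e0: "\<forall>n\<ge>N. 0 \<le> e n" and b0: "\<forall>n. 0 \<le> \<beta> n" and sb: "summable \<beta>"
    and bb0: "\<forall>n. 0 \<le> b n" and sbb: "summable b" and su: "summable u"
    and act: "\<forall>n\<ge>N. A n \<longrightarrow> e (Suc n) \<le> (1 + \<beta> n) * e n + u n + b n"
    and inact: "\<forall>n\<ge>N. \<not> A n \<longrightarrow> e (Suc n) \<le> C"
  shows "\<exists>E N'. \<forall>n\<ge>N'. e n \<le> E"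
proof -
  define U where "U n = (\<Sum>k<n. u k)" for n
  have "Cauchy U" unfolding U_def using su summable_iff_convergent convergent_Cauchy by blast
  then obtain M where M: "\<forall>m\<ge>M. \<forall>n\<ge>M. dist (U m) (U n) < 1"
    unfolding Cauchy_def by (meson zero_less_one)
  define N' where "N' = max M N"
  have UU: "\<bar>U n - U N'\<bar> \<le> 1" if "n \<ge> N'" for n
    using M that unfolding N'_def dist_real_def by (meson less_imp_le max.cobounded1 order.trans)
  define H where "H n = e n - (U n - U N') + 1" for n
  define A0 where "A0 = max (H N') (C + 2)"
  define P where "P n = (\<Prod>k\<in>{N'..<n}. 1 + \<beta> k)" for n
  define S where "S n = (\<Sum>k\<in>{N'..<n}. b k)" for n
  have P1: "P n \<ge> 1" for n unfolding P_def using b0 by (intro prod_ge_1) auto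
  have S0: "S n \<ge> 0" for n unfolding S_def using bb0 by (intro sum_nonneg) auto
  have HN: "H N' \<ge> 1" unfolding H_def using e0 N'_def by auto
  have eH: "e n \<le> H n" if "n \<ge> N'" for n using UU[OF that] unfolding H_def by auto
  have claim: "H n \<le> P n * (A0 + S n)" if "n \<ge> N'" for n
    using that
  proof (induction n rule: dec_induct)
    case base
    then show ?case unfolding P_def S_def A0_def by simp
  next
    case (step n)
    have nN: "n \<ge> N" using step N'_def by auto
    have R0: "A0 + S n \<ge> 0" using S0[of n] HN A0_def by auto
    have PS: "P (Suc n) = (1 + \<beta> n) * P n" unfolding P_def using step(1)
      by (simp add: prod.atLeastLessThan_Suc mult.commute)
    have SS: "S (Suc n) = S n + b n" unfolding S_def using step(1)
      by (simp add: sum.atLeastLessThan_Suc)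
    have US: "U (Suc n) = U n + u n" unfolding U_def by simp
    show ?case
    proof (cases "A n")
      case True
      have "H (Suc n) \<le> (1 + \<beta> n) * e n + u n + b n - (U (Suc n) - U N') + 1"
        using act nN True unfolding H_def by auto
      also have "\<dots> = \<beta> n * e n + b n + H n" unfolding H_def US by (simp add: algebra_simps)
      also have "\<dots> \<le> \<beta> n * H n + b n + H n"
        using eH[OF step(1)] b0 by (simp add: mult_left_mono)
      also have "\<dots> = (1 + \<beta> n) * H n + b n" by (simp add: algebra_simps)
      also have "\<dots> \<le> (1 + \<beta> n) * (P n * (A0 + S n)) + b n"
        using step(3) b0 by (smt (verit) mult_left_mono)
      also have "\<dots> \<le> (1 + \<beta> n) * P n * (A0 + S n) + (1 + \<beta> n) * P n * b n"
        using P1[of n] b0[rule_format, of n] bb0[rule_format, of n]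
        by (smt (verit, best) mult.assoc mult_le_cancel_right1 mult_less_cancel_right2 one_le_mult_iff)
      also have "\<dots> = P (Suc n) * (A0 + S (Suc n))" unfolding PS SS by (simp add: algebra_simps)
      finally show ?thesis .
    next
      case False
      have "H (Suc n) \<le> C + 2" using inact nN False UU[of "Suc n"] step(1) unfolding H_def by force
      also have "\<dots> \<le> A0 + S (Suc n)" using S0[of "Suc n"] A0_def by auto
      also have "\<dots> \<le> P (Suc n) * (A0 + S (Suc n))"
        using P1[of "Suc n"] S0[of "Suc n"] HN A0_def
        by (smt (verit, best) mult_le_cancel_right1)
      finally show ?thesis .
    qed
  qed
  have Pb: "P n \<le> exp (suminf \<beta>)" for n
  proof -
    have "P n \<le> (\<Prod>k\<in>{N'..<n}. exp (\<beta> k))" unfolding P_def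
      using b0 by (intro prod_mono) (auto simp: add_nonneg_nonneg exp_ge_add_one_self)
    also have "\<dots> = exp (\<Sum>k\<in>{N'..<n}. \<beta> k)" by (simp add: exp_sum)
    also have "\<dots> \<le> exp (suminf \<beta>)"
      using sum_le_suminf[OF sb, of "{N'..<n}"] b0 by auto
    finally show ?thesis .
  qed
  have Sb: "S n \<le> suminf b" for n
    unfolding S_def using sum_le_suminf[OF sbb, of "{N'..<n}"] bb0 by auto
  have "e n \<le> exp (suminf \<beta>) * (A0 + suminf b)" if "n \<ge> N'" for n
  proof -
    have "e n \<le> P n * (A0 + S n)" using eH[OF that] claim[OF that] by auto
    also have "\<dots> \<le> exp (suminf \<beta>) * (A0 + suminf b)"
      using Pb[of n] Sb[of n] P1[of n] S0[of n] HN A0_def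
      by (intro mult_mono) auto
    finally show ?thesis .
  qed
  then show ?thesis by blast
qed

lemma det_limsup:
  fixes e u b \<beta> \<gamma> :: "nat \<Rightarrow> real" and A :: "nat \<Rightarrow> bool"
  assumes e0: "\<forall>n\<ge>N. 0 \<le> e n" and b0: "\<forall>n. 0 \<le> \<beta> n" and sb: "summable \<beta>"
    and bb0: "\<forall>n. 0 \<le> b n" and sbb: "summable b" and su: "summable u"
    and g0: "\<forall>n. 0 \<le> \<gamma> n" and sg: "\<not> summable \<gamma>" and c0: "c > 0" and eta: "\<eta> > 0"
    and act: "\<forall>n\<ge>N. A n \<longrightarrow> e (Suc n) \<le> e n + \<beta> n * E + b n + u n - \<gamma> n * c"
    and inact: "\<forall>n\<ge>N. \<not> A n \<longrightarrow> e (Suc n) \<le> C"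
  shows "\<exists>N'. \<forall>n\<ge>N'. e n \<le> C + \<eta>"
proof -
  define r where "r n = \<beta> n * E + b n + u n" for n
  have sr: "summable r" unfolding r_def using sb sbb su
    by (intro summable_add summable_mult2) auto
  define R where "R n = (\<Sum>k<n. r k)" for n
  have "Cauchy R" unfolding R_def using sr summable_iff_convergent convergent_Cauchy by blast
  then obtain M where M: "\<forall>m\<ge>M. \<forall>n\<ge>M. dist (R m) (R n) < \<eta>"
    unfolding Cauchy_def using eta by meson
  define N1 where "N1 = max M N"
  have RR: "\<bar>R m - R n\<bar> < \<eta>" if "m \<ge> N1" "n \<ge> N1" for m n
    using M that unfolding N1_def dist_real_def by auto
  have tele: "e m \<le> e j + (R m - R j) - c * (\<Sum>k\<in>{j..<m}. \<gamma> k)"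
    if "N1 \<le> j" "j \<le> m" "\<forall>k. j \<le> k \<and> k < m \<longrightarrow> A k" for j m
    using that(2,3)
  proof (induction m rule: dec_induct)
    case base then show ?case by simp
  next
    case (step m)
    have "A m" using step by auto
    moreover have "m \<ge> N" using step that(1) N1_def by auto
    ultimately have "e (Suc m) \<le> e m + r m - \<gamma> m * c" using act unfolding r_def by auto
    moreover have "e m \<le> e j + (R m - R j) - c * (\<Sum>k\<in>{j..<m}. \<gamma> k)" using step by auto
    moreover have "R (Suc m) = R m + r m" unfolding R_def by simp
    moreover have "(\<Sum>k\<in>{j..<Suc m}. \<gamma> k) = (\<Sum>k\<in>{j..<m}. \<gamma> k) + \<gamma> m"
      using step(1) by (simp add: sum.atLeastLessThan_Suc)
    ultimately show ?case by (simp add: algebra_simps)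
  qed
  have "\<exists>n0\<ge>N1. \<not> A n0"
  proof (rule ccontr)
    assume "\<not> ?thesis"
    then have allA: "\<forall>k\<ge>N1. A k" by auto
    have bnd: "(\<Sum>k<n. \<gamma> k) \<le> (\<Sum>k<N1. \<gamma> k) + (e N1 + \<eta>) / c" for n
    proof (cases "n \<le> N1")
      case True
      then have "(\<Sum>k<n. \<gamma> k) \<le> (\<Sum>k<N1. \<gamma> k)"
        using g0 by (intro sum_mono2) auto
      moreover have "e N1 + \<eta> \<ge> 0" using e0 eta N1_def by auto
      ultimately show ?thesis using c0 by (smt (verit) divide_nonneg_pos)
    next
      case False
      have "e n \<le> e N1 + (R n - R N1) - c * (\<Sum>k\<in>{N1..<n}. \<gamma> k)"
        using tele[of N1 n] allA False by auto
      moreover have "e n \<ge> 0" using e0 False N1_def by auto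
      moreover have "R n - R N1 < \<eta>" using RR[of n N1] False by auto
      ultimately have "c * (\<Sum>k\<in>{N1..<n}. \<gamma> k) \<le> e N1 + \<eta>" by auto
      then have "(\<Sum>k\<in>{N1..<n}. \<gamma> k) \<le> (e N1 + \<eta>) / c" using c0
        by (simp add: field_simps mult.commute)
      moreover have "(\<Sum>k<n. \<gamma> k) = (\<Sum>k<N1. \<gamma> k) + (\<Sum>k\<in>{N1..<n}. \<gamma> k)"
        using False by (metis le_add_diff_inverse lessThan_atLeast0 nat_le_linear sum.atLeastLessThan_concat zero_le)
      ultimately show ?thesis by auto
    qed
    have "summable \<gamma>" using g0 bnd by (intro summableI_nonneg_bounded) auto
    then show False using sg by auto
  qed
  then obtain n0 where n0: "n0 \<ge> N1" "\<not> A n0" by auto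
  have ex: "\<exists>j. Suc n0 \<le> j \<and> j \<le> m \<and> e j \<le> C \<and> (\<forall>k. j \<le> k \<and> k < m \<longrightarrow> A k)"
    if "m \<ge> Suc n0" for m
    using that
  proof (induction m rule: dec_induct)
    case base
    have "e (Suc n0) \<le> C" using inact n0 N1_def by auto
    then show ?case by auto
  next
    case (step m)
    show ?case
    proof (cases "A m")
      case True
      then show ?thesis using step by (metis le_SucI less_Suc_eq)
    next
      case False
      have "m \<ge> N" using step n0 N1_def by auto
      then have "e (Suc m) \<le> C" using inact False by auto
      then show ?thesis using step(1) by (intro exI[of _ "Suc m"]) auto
    qed
  qed
  have "e m \<le> C + \<eta>" if mn: "m \<ge> Suc n0" for m
  proof -
    obtain j where j: "Suc n0 \<le> j" "j \<le> m" "e j \<le> C" "\<forall>k. j \<le> k \<and> k < m \<longrightarrow> A k"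
      using ex[OF mn] by auto
    have "e m \<le> e j + (R m - R j) - c * (\<Sum>k\<in>{j..<m}. \<gamma> k)"
      using tele[of j m] j n0 by auto
    moreover have "(\<Sum>k\<in>{j..<m}. \<gamma> k) \<ge> 0" using g0 by (intro sum_nonneg) auto
    moreover have "R m - R j < \<eta>" using RR[of m j] j n0 by auto
    ultimately show ?thesis using j c0 by (smt (verit) mult_nonneg_nonneg)
  qed
  then show ?thesis by blast
qed

lemma abs_add_sgn_bound:
  fixes t w \<epsilon> :: real
  assumes "\<epsilon> > 0" "\<epsilon> \<le> \<bar>t\<bar>"
  shows "\<bar>t + w\<bar> \<le> \<bar>t\<bar> + sgn t * w + 2 * w\<^sup>2 / \<epsilon>"
proof (cases "\<bar>w\<bar> \<le> \<bar>t\<bar>")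
  case True
  have "w\<^sup>2 / \<epsilon> \<ge> 0" using assms by auto
  moreover have "\<bar>t + w\<bar> = \<bar>t\<bar> + sgn t * w" using True assms
    by (cases "t > 0") (auto simp: sgn_if abs_if)
  ultimately show ?thesis by linarith
next
  case False
  have "2 * \<bar>w\<bar> \<le> 2 * w\<^sup>2 / \<epsilon>"
  proof -
    have "\<epsilon> * \<bar>w\<bar> \<le> \<bar>w\<bar> * \<bar>w\<bar>" using False assms by (intro mult_right_mono) auto
    then have "\<bar>w\<bar> \<le> w\<^sup>2 / \<epsilon>" using assms by (simp add: field_simps power2_eq_square mult.commute)
    then show ?thesis by simp
  qed
  moreover have "sgn t * w \<ge> - \<bar>w\<bar>" by (cases "t > 0"; cases "t < 0") (auto simp: sgn_if)
  ultimately show ?thesis by (smt (verit) abs_triangle_ineq)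
qed

lemma det_main:
  fixes x t w \<alpha> \<beta> \<gamma> :: "nat \<Rightarrow> real" and xs \<epsilon> :: real
  assumes rec: "\<forall>n. x (Suc n) = t n + w n"
    and bound: "\<forall>n. \<bar>t n - xs\<bar> \<le> max (\<alpha> n) ((1 + \<beta> n - \<gamma> n) * \<bar>x n - xs\<bar>)"
    and nn: "\<forall>n. \<alpha> n \<ge> 0 \<and> \<beta> n \<ge> 0 \<and> \<gamma> n \<ge> 0"
    and al: "\<alpha> \<longlonglongrightarrow> 0" and sb: "summable \<beta>" and sg: "\<not> summable \<gamma>"
    and sw: "summable (\<lambda>n. (w n)\<^sup>2)"
    and su: "summable (\<lambda>n. (if \<epsilon> \<le> \<bar>t n - xs\<bar> then sgn (t n - xs) else 0) * w n)"
    and ep: "\<epsilon> > 0"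
  shows "\<exists>N. \<forall>n\<ge>N. \<bar>x n - xs\<bar> \<le> 3 * \<epsilon>"
proof -
  define e where "e n = \<bar>x n - xs\<bar>" for n
  define u where "u n = (if \<epsilon> \<le> \<bar>t n - xs\<bar> then sgn (t n - xs) else 0) * w n" for n
  define b where "b n = 2 * (w n)\<^sup>2 / \<epsilon>" for n
  define A where "A n = (\<epsilon> \<le> \<bar>t n - xs\<bar>)" for n
  have sbb: "summable b" unfolding b_def using sw by (intro summable_divide summable_mult) auto
  have bb0: "\<forall>n. 0 \<le> b n" unfolding b_def using ep by auto
  have b0: "\<forall>n. 0 \<le> \<beta> n" and g0: "\<forall>n. 0 \<le> \<gamma> n" using nn by auto
  have ev1: "eventually (\<lambda>n. \<alpha> n < \<epsilon>) sequentially"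
    using al ep by (simp add: order_tendstoD(2))
  have "\<beta> \<longlonglongrightarrow> 0" using sb summable_LIMSEQ_zero by blast
  then have ev2: "eventually (\<lambda>n. \<beta> n < 1) sequentially" by (simp add: order_tendstoD(2))
  have "(\<lambda>n. (w n)\<^sup>2) \<longlonglongrightarrow> 0" using sw summable_LIMSEQ_zero by blast
  then have "eventually (\<lambda>n. (w n)\<^sup>2 < \<epsilon>\<^sup>2) sequentially"
    by (rule order_tendstoD(2)) (use ep in auto)
  then have ev3: "eventually (\<lambda>n. \<bar>w n\<bar> < \<epsilon>) sequentially"
    by eventually_elim (use ep in \<open>simp add: abs_less_iff power2_less_imp_less\<close>)
  obtain N where N: "\<forall>n\<ge>N. \<alpha> n < \<epsilon> \<and> \<beta> n < 1 \<and> \<bar>w n\<bar> < \<epsilon>"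
    using eventually_conj[OF ev1 eventually_conj[OF ev2 ev3]] unfolding eventually_sequentially by blast
  have e0: "\<forall>n\<ge>N. 0 \<le> e n" unfolding e_def by auto
  have step_act: "e (Suc n) \<le> (1 + \<beta> n - \<gamma> n) * e n + u n + b n \<and> \<epsilon> \<le> 2 * e n"
    if "n \<ge> N" "A n" for n
  proof -
    have tt: "\<bar>t n - xs\<bar> \<le> (1 + \<beta> n - \<gamma> n) * e n"
      using bound[rule_format, of n] N that unfolding A_def e_def by auto
    have "e (Suc n) = \<bar>(t n - xs) + w n\<bar>" unfolding e_def using rec by (simp add: algebra_simps)
    also have "\<dots> \<le> \<bar>t n - xs\<bar> + sgn (t n - xs) * w n + 2 * (w n)\<^sup>2 / \<epsilon>"
      using abs_add_sgn_bound[OF ep] that unfolding A_def by auto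
    finally have 1: "e (Suc n) \<le> (1 + \<beta> n - \<gamma> n) * e n + u n + b n"
      using tt that unfolding u_def b_def A_def by auto
    have "(1 + \<beta> n - \<gamma> n) * e n \<le> 2 * e n"
      using N that g0 unfolding e_def by (intro mult_right_mono) (auto simp: less_imp_le, smt (verit))
    then have "\<epsilon> \<le> 2 * e n" using tt that unfolding A_def by auto
    with 1 show ?thesis by auto
  qed
  have inact: "\<forall>n\<ge>N. \<not> A n \<longrightarrow> e (Suc n) \<le> 2 * \<epsilon>"
  proof (intro allI impI)
    fix n assume n: "n \<ge> N" "\<not> A n"
    have "e (Suc n) = \<bar>(t n - xs) + w n\<bar>" unfolding e_def using rec by (simp add: algebra_simps)
    also have "\<dots> \<le> \<bar>t n - xs\<bar> + \<bar>w n\<bar>" by (rule abs_triangle_ineq)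
    finally show "e (Suc n) \<le> 2 * \<epsilon>" using n N unfolding A_def by force
  qed
  have su': "summable u" using su unfolding u_def .
  have act1: "\<forall>n\<ge>N. A n \<longrightarrow> e (Suc n) \<le> (1 + \<beta> n) * e n + u n + b n"
  proof (intro allI impI)
    fix n assume n: "n \<ge> N" "A n"
    have "\<gamma> n * e n \<ge> 0" using g0 unfolding e_def by auto
    then show "e (Suc n) \<le> (1 + \<beta> n) * e n + u n + b n"
      using step_act[OF n] by (simp add: algebra_simps)
  qed
  obtain E N' where EN: "\<forall>n\<ge>N'. e n \<le> E"
    using det_bounded[OF e0 b0 sb bb0 sbb su' act1 inact] by blast
  define E' where "E' = max E 0"
  define N2 where "N2 = max N N'"
  have act2: "\<forall>n\<ge>N2. A n \<longrightarrow> e (Suc n) \<le> e n + \<beta> n * E' + b n + u n - \<gamma> n * (\<epsilon> / 2)"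
  proof (intro allI impI)
    fix n assume n: "n \<ge> N2" "A n"
    have nN: "n \<ge> N" using n N2_def by auto
    have "\<beta> n * e n \<le> \<beta> n * E'" using EN n b0 N2_def E'_def
      by (intro mult_left_mono) auto
    moreover have "\<gamma> n * (\<epsilon> / 2) \<le> \<gamma> n * e n" using step_act[OF nN n(2)] g0
      by (intro mult_left_mono) auto
    ultimately show "e (Suc n) \<le> e n + \<beta> n * E' + b n + u n - \<gamma> n * (\<epsilon> / 2)"
      using step_act[OF nN n(2)] by (simp add: algebra_simps)
  qed
  have e02: "\<forall>n\<ge>N2. 0 \<le> e n" unfolding e_def by auto
  have inact2: "\<forall>n\<ge>N2. \<not> A n \<longrightarrow> e (Suc n) \<le> 2 * \<epsilon>" using inact N2_def by auto
  obtain N3 where "\<forall>n\<ge>N3. e n \<le> 2 * \<epsilon> + \<epsilon>"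
    using det_limsup[OF e02 b0 sb bb0 sbb su' g0 sg _ ep act2 inact2] ep by auto
  then show ?thesis unfolding e_def by auto
qed


locale dvz = prob_space M for M :: "'a measure" +
  fixes F :: "nat \<Rightarrow> 'a measure" and W :: "nat \<Rightarrow> 'a \<Rightarrow> real" and a :: "nat \<Rightarrow> 'a \<Rightarrow> real"
  assumes sub: "\<And>n. subalgebra M (F n)"
    and incr: "\<And>n. sets (F n) \<subseteq> sets (F (Suc n))"
    and W_meas: "\<And>n. W n \<in> borel_measurable (F (Suc n))"
    and W_cond: "\<And>n. AE \<omega> in M. real_cond_exp M (F n) (W n) \<omega> = 0"
    and W_sq: "(\<Sum>n. \<integral>\<^sup>+ \<omega>. ennreal ((W n \<omega>)\<^sup>2) \<partial>M) < \<infinity>"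
    and a_meas: "\<And>n. a n \<in> borel_measurable (F n)"
    and a_bnd: "\<And>n \<omega>. \<bar>a n \<omega>\<bar> \<le> 1"
begin

lemma sets_mono: "i \<le> j \<Longrightarrow> sets (F i) \<subseteq> sets (F j)"
proof (induction j rule: dec_induct)
  case base then show ?case by simp
next
  case (step j) then show ?case using incr[of j] by auto
qed

lemma meas_mono: "f \<in> borel_measurable (F i) \<Longrightarrow> i \<le> j \<Longrightarrow> f \<in> borel_measurable (F j)"
  by (rule measurable_from_subalg[of "F j" "F i"])
     (use sub[of i] sub[of j] sets_mono[of i j] in \<open>auto simp: subalgebra_def\<close>)

lemma measM: "f \<in> borel_measurable (F i) \<Longrightarrow> f \<in> borel_measurable M"
  by (rule measurable_from_subalg[OF sub])

lemma W_M[measurable]: "W n \<in> borel_measurable M" using measM[OF W_meas] .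
lemma a_M[measurable]: "a n \<in> borel_measurable M" using measM[OF a_meas] .

lemma W_nn_fin: "(\<integral>\<^sup>+ \<omega>. ennreal ((W n \<omega>)\<^sup>2) \<partial>M) < \<infinity>"
  using ennreal_suminf_lessD[OF W_sq] .

lemma W_int2: "integrable M (\<lambda>\<omega>. (W n \<omega>)\<^sup>2)"
  using W_nn_fin[of n] by (intro integrableI_nn_integral_finite[where x="enn2real (\<integral>\<^sup>+ \<omega>. ennreal ((W n \<omega>)\<^sup>2) \<partial>M)"]) auto

definition w2 where "w2 n = (\<integral>\<omega>. (W n \<omega>)\<^sup>2 \<partial>M)"

lemma w2_nonneg: "w2 n \<ge> 0" unfolding w2_def by auto

lemma w2_summable: "summable w2"
proof -
  have "(\<integral>\<^sup>+ \<omega>. ennreal ((W n \<omega>)\<^sup>2) \<partial>M) = ennreal (w2 n)" for n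
    unfolding w2_def using W_int2 by (intro nn_integral_eq_integral) auto
  then show ?thesis using W_sq w2_nonneg by (intro summable_suminf_not_top) auto
qed

lemma sfs: "sigma_finite_subalgebra M (F n)"
  by (rule finite_measure_subalgebra_is_sigma_finite) (unfold_locales, rule sub)

definition Y where "Y k \<omega> = a k \<omega> * W k \<omega>"

lemma Y_meas: "Y k \<in> borel_measurable (F (Suc k))"
  unfolding Y_def using meas_mono[OF a_meas[of k], of "Suc k"] W_meas[of k] by measurable

lemma Y_M[measurable]: "Y k \<in> borel_measurable M" using measM[OF Y_meas] .

lemma Y_int2: "integrable M (\<lambda>\<omega>. (Y k \<omega>)\<^sup>2)"
proof (rule Bochner_Integration.integrable_bound[OF W_int2[of k]])
  show "(\<lambda>\<omega>. (Y k \<omega>)\<^sup>2) \<in> borel_measurable M" by measurable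
  show "AE \<omega> in M. norm ((Y k \<omega>)\<^sup>2) \<le> norm ((W k \<omega>)\<^sup>2)"
  proof (intro AE_I2)
    fix \<omega>
    have "\<bar>Y k \<omega>\<bar> \<le> \<bar>W k \<omega>\<bar>" unfolding Y_def using a_bnd[of k \<omega>]
      by (simp add: abs_mult mult_left_le_one_le)
    then show "norm ((Y k \<omega>)\<^sup>2) \<le> norm ((W k \<omega>)\<^sup>2)"
      by (simp add: abs_le_square_iff)
  qed
qed

lemma Y_sq_le: "(\<integral>\<omega>. (Y k \<omega>)\<^sup>2 \<partial>M) \<le> w2 k"
  unfolding w2_def
proof (rule integral_mono[OF Y_int2 W_int2])
  fix \<omega>
  have "\<bar>Y k \<omega>\<bar> \<le> \<bar>W k \<omega>\<bar>" unfolding Y_def using a_bnd[of k \<omega>]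
    by (simp add: abs_mult mult_left_le_one_le)
  then show "(Y k \<omega>)\<^sup>2 \<le> (W k \<omega>)\<^sup>2" by (simp add: abs_le_square_iff)
qed

lemma int_prod:
  fixes f g :: "'a \<Rightarrow> real"
  assumes [measurable]: "f \<in> borel_measurable M" "g \<in> borel_measurable M"
    and "integrable M (\<lambda>\<omega>. (f \<omega>)\<^sup>2)" "integrable M (\<lambda>\<omega>. (g \<omega>)\<^sup>2)"
  shows "integrable M (\<lambda>\<omega>. f \<omega> * g \<omega>)"
proof (rule Bochner_Integration.integrable_bound[of _ "\<lambda>\<omega>. (f \<omega>)\<^sup>2 + (g \<omega>)\<^sup>2"])
  show "integrable M (\<lambda>\<omega>. (f \<omega>)\<^sup>2 + (g \<omega>)\<^sup>2)" using assms by auto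
  show "(\<lambda>\<omega>. f \<omega> * g \<omega>) \<in> borel_measurable M" by measurable
  show "AE \<omega> in M. norm (f \<omega> * g \<omega>) \<le> norm ((f \<omega>)\<^sup>2 + (g \<omega>)\<^sup>2)"
  proof (intro AE_I2)
    fix \<omega>
    have "2 * \<bar>f \<omega>\<bar> * \<bar>g \<omega>\<bar> \<le> (f \<omega>)\<^sup>2 + (g \<omega>)\<^sup>2"
      using sum_squares_bound[of "\<bar>f \<omega>\<bar>" "\<bar>g \<omega>\<bar>"] by simp
    moreover have "\<bar>f \<omega>\<bar> * \<bar>g \<omega>\<bar> \<ge> 0" by auto
    ultimately have "\<bar>f \<omega>\<bar> * \<bar>g \<omega>\<bar> \<le> (f \<omega>)\<^sup>2 + (g \<omega>)\<^sup>2"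
      by (simp only: mult.assoc)
    then show "norm (f \<omega> * g \<omega>) \<le> norm ((f \<omega>)\<^sup>2 + (g \<omega>)\<^sup>2)"
      by (simp add: abs_mult)
  qed
qed

lemma orth:
  assumes Zm: "Z \<in> borel_measurable (F j)" and Zi: "integrable M (\<lambda>\<omega>. (Z \<omega>)\<^sup>2)" and jk: "j \<le> k"
  shows "(\<integral>\<omega>. Z \<omega> * Y k \<omega> \<partial>M) = 0"
proof -
  interpret S: sigma_finite_subalgebra M "F k" by (rule sfs)
  have Zk[measurable]: "Z \<in> borel_measurable (F k)" using meas_mono[OF Zm jk] .
  have ZM[measurable]: "Z \<in> borel_measurable M" using measM[OF Zm] .
  define f where "f \<omega> = Z \<omega> * a k \<omega>" for \<omega>
  have fk[measurable]: "f \<in> borel_measurable (F k)" unfolding f_def using a_meas[of k] by measurable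
  have fM[measurable]: "f \<in> borel_measurable M" using measM[OF fk] .
  have "integrable M (\<lambda>\<omega>. Z \<omega> * Y k \<omega>)" by (rule int_prod) (use Zi Y_int2 in auto)
  then have fi: "integrable M (\<lambda>\<omega>. f \<omega> * W k \<omega>)" unfolding f_def Y_def by (simp add: mult.assoc)
  have "(\<integral>\<omega>. Z \<omega> * Y k \<omega> \<partial>M) = (\<integral>\<omega>. f \<omega> * W k \<omega> \<partial>M)"
    unfolding f_def Y_def by (simp add: mult.assoc)
  also have "\<dots> = (\<integral>\<omega>. f \<omega> * real_cond_exp M (F k) (W k) \<omega> \<partial>M)"
    using S.real_cond_exp_intg(2)[OF fi fk W_M] by simp
  also have "\<dots> = (\<integral>\<omega>. 0 \<partial>M)"
    by (rule integral_cong_AE) (use W_cond[of k] in auto)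
  finally show ?thesis by simp
qed

definition D where "D n j \<omega> = (\<Sum>k\<in>{n..<j}. Y k \<omega>)"

lemma D_meas: "D n j \<in> borel_measurable (F j)"
  unfolding D_def
proof (rule borel_measurable_sum)
  fix k assume "k \<in> {n..<j}"
  then show "Y k \<in> borel_measurable (F j)" using meas_mono[OF Y_meas[of k], of j] by auto
qed

lemma D_M[measurable]: "D n j \<in> borel_measurable M" using measM[OF D_meas] .

lemma D_sq: "n \<le> j \<Longrightarrow> integrable M (\<lambda>\<omega>. (D n j \<omega>)\<^sup>2) \<and>
    (\<integral>\<omega>. (D n j \<omega>)\<^sup>2 \<partial>M) = (\<Sum>k\<in>{n..<j}. \<integral>\<omega>. (Y k \<omega>)\<^sup>2 \<partial>M)"
proof (induction j rule: dec_induct)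
  case base then show ?case unfolding D_def by simp
next
  case (step j)
  have DS: "D n (Suc j) \<omega> = D n j \<omega> + Y j \<omega>" for \<omega>
    unfolding D_def using step(1) by (simp add: sum.atLeastLessThan_Suc)
  have i1: "integrable M (\<lambda>\<omega>. (D n j \<omega>)\<^sup>2)" using step by auto
  have i2: "integrable M (\<lambda>\<omega>. D n j \<omega> * Y j \<omega>)" by (rule int_prod) (use i1 Y_int2 in auto)
  have eq: "(\<lambda>\<omega>. (D n (Suc j) \<omega>)\<^sup>2) = (\<lambda>\<omega>. (D n j \<omega>)\<^sup>2 + 2 * (D n j \<omega> * Y j \<omega>) + (Y j \<omega>)\<^sup>2)"
    unfolding DS by (simp add: power2_eq_square algebra_simps)
  have int: "integrable M (\<lambda>\<omega>. (D n (Suc j) \<omega>)\<^sup>2)" unfolding eq using i1 i2 Y_int2 by auto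
  have "(\<integral>\<omega>. (D n (Suc j) \<omega>)\<^sup>2 \<partial>M) = (\<integral>\<omega>. (D n j \<omega>)\<^sup>2 \<partial>M) + 2 * (\<integral>\<omega>. D n j \<omega> * Y j \<omega> \<partial>M) + (\<integral>\<omega>. (Y j \<omega>)\<^sup>2 \<partial>M)"
    unfolding eq using i1 i2 Y_int2 by simp
  also have "(\<integral>\<omega>. D n j \<omega> * Y j \<omega> \<partial>M) = 0" by (rule orth[OF D_meas i1]) simp
  finally have "(\<integral>\<omega>. (D n (Suc j) \<omega>)\<^sup>2 \<partial>M) = (\<Sum>k\<in>{n..<j}. \<integral>\<omega>. (Y k \<omega>)\<^sup>2 \<partial>M) + (\<integral>\<omega>. (Y j \<omega>)\<^sup>2 \<partial>M)"
    using step(3) by linarith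
  moreover have "(\<Sum>k\<in>{n..<Suc j}. \<integral>\<omega>. (Y k \<omega>)\<^sup>2 \<partial>M) = (\<Sum>k\<in>{n..<j}. \<integral>\<omega>. (Y k \<omega>)\<^sup>2 \<partial>M) + (\<integral>\<omega>. (Y j \<omega>)\<^sup>2 \<partial>M)"
    using step(1) by (rule sum.atLeastLessThan_Suc)
  ultimately show ?case using int by simp
qed

lemma D_int2: "integrable M (\<lambda>\<omega>. (D n j \<omega>)\<^sup>2)"
proof (cases "n \<le> j")
  case True then show ?thesis using D_sq by auto
next
  case False then show ?thesis unfolding D_def by simp
qed

lemma D_sq_le: "n \<le> j \<Longrightarrow> (\<integral>\<omega>. (D n j \<omega>)\<^sup>2 \<partial>M) \<le> (\<Sum>i. w2 (i + n))"
proof -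
  assume nj: "n \<le> j"
  have "(\<integral>\<omega>. (D n j \<omega>)\<^sup>2 \<partial>M) \<le> (\<Sum>k\<in>{n..<j}. w2 k)"
    using D_sq[OF nj] Y_sq_le by (simp add: sum_mono)
  also have "\<dots> = (\<Sum>i<j - n. w2 (i + n))"
  proof -
    have "{n..<j} = {0 + n..<(j - n) + n}" using nj by simp
    then have "(\<Sum>k\<in>{n..<j}. w2 k) = (\<Sum>i\<in>{0..<j - n}. w2 (i + n))"
      by (simp only: sum.shift_bounds_nat_ivl)
    then show ?thesis by (simp add: atLeast0LessThan)
  qed
  also have "\<dots> \<le> (\<Sum>i. w2 (i + n))"
    using summable_ignore_initial_segment[OF w2_summable, of n] w2_nonneg
    by (intro sum_le_suminf) auto
  finally show ?thesis .
qed

lemma orthD: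
  assumes Zm: "Z \<in> borel_measurable (F j)" and Zi: "integrable M (\<lambda>\<omega>. (Z \<omega>)\<^sup>2)"
  shows "(\<integral>\<omega>. Z \<omega> * D j m \<omega> \<partial>M) = 0"
proof -
  have ZM[measurable]: "Z \<in> borel_measurable M" using measM[OF Zm] .
  have "(\<integral>\<omega>. Z \<omega> * D j m \<omega> \<partial>M) = (\<integral>\<omega>. (\<Sum>k\<in>{j..<m}. Z \<omega> * Y k \<omega>) \<partial>M)"
    unfolding D_def by (simp add: sum_distrib_left)
  also have "\<dots> = (\<Sum>k\<in>{j..<m}. \<integral>\<omega>. Z \<omega> * Y k \<omega> \<partial>M)"
    by (rule Bochner_Integration.integral_sum) (rule int_prod, use Zi Y_int2 in auto)
  also have "\<dots> = 0" using orth[OF Zm Zi] by simp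
  finally show ?thesis .
qed

definition Ind where "Ind n l j \<omega> = (if l \<le> \<bar>D n j \<omega>\<bar> \<and> (\<forall>i. n \<le> i \<and> i < j \<longrightarrow> \<bar>D n i \<omega>\<bar> < l) then 1 else 0 :: real)"

lemma Ind_meas: "Ind n l j \<in> borel_measurable (F j)"
proof -
  have [measurable]: "D n j \<in> borel_measurable (F j)" by (rule D_meas)
  have p: "Measurable.pred (F j) (\<lambda>\<omega>. n \<le> i \<and> i < j \<longrightarrow> \<bar>D n i \<omega>\<bar> < l)" for i
  proof (cases "i < j")
    case True
    then have [measurable]: "D n i \<in> borel_measurable (F j)" using meas_mono[OF D_meas[of n i], of j] by auto
    show ?thesis by measurable
  next
    case False then show ?thesis by simp
  qed
  show ?thesis unfolding Ind_def using p by measurable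
qed

lemma Ind_M[measurable]: "Ind n l j \<in> borel_measurable M" using measM[OF Ind_meas] .

lemma Ind_01: "Ind n l j \<omega> = 0 \<or> Ind n l j \<omega> = 1" unfolding Ind_def by auto

lemma int_times_Ind:
  fixes f :: "'a \<Rightarrow> real"
  assumes [measurable]: "f \<in> borel_measurable M" and "integrable M f"
  shows "integrable M (\<lambda>\<omega>. f \<omega> * Ind n l j \<omega>)"
  by (rule Bochner_Integration.integrable_bound[OF assms(2)]) (auto simp: Ind_def)

lemma kol_step:
  assumes nj: "n \<le> j" and jm: "j \<le> m" and l0: "0 \<le> l"
  shows "l\<^sup>2 * (\<integral>\<omega>. Ind n l j \<omega> \<partial>M) \<le> (\<integral>\<omega>. (D n m \<omega>)\<^sup>2 * Ind n l j \<omega> \<partial>M)"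
proof -
  define Z where "Z \<omega> = D n j \<omega> * Ind n l j \<omega>" for \<omega>
  have Zm: "Z \<in> borel_measurable (F j)" unfolding Z_def using D_meas[of n j] Ind_meas[of n l j] by measurable
  have ZM[measurable]: "Z \<in> borel_measurable M" using measM[OF Zm] .
  have Zi: "integrable M (\<lambda>\<omega>. (Z \<omega>)\<^sup>2)"
  proof -
    have "(\<lambda>\<omega>. (Z \<omega>)\<^sup>2) = (\<lambda>\<omega>. (D n j \<omega>)\<^sup>2 * Ind n l j \<omega>)"
      unfolding Z_def using Ind_01 by (auto simp: fun_eq_iff power2_eq_square)
    then show ?thesis using int_times_Ind[OF _ D_int2] by simp
  qed
  have Dsplit: "D n m \<omega> = D n j \<omega> + D j m \<omega>" for \<omega>
    unfolding D_def using nj jm by (simp add: sum.atLeastLessThan_concat)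
  have i1: "integrable M (\<lambda>\<omega>. (D n j \<omega>)\<^sup>2 * Ind n l j \<omega>)" by (rule int_times_Ind[OF _ D_int2]) simp
  have i2: "integrable M (\<lambda>\<omega>. Z \<omega> * D j m \<omega>)" by (rule int_prod) (use Zi D_int2 in auto)
  have i3: "integrable M (\<lambda>\<omega>. (D n m \<omega>)\<^sup>2 * Ind n l j \<omega>)" by (rule int_times_Ind[OF _ D_int2]) simp
  have "l\<^sup>2 * (\<integral>\<omega>. Ind n l j \<omega> \<partial>M) = (\<integral>\<omega>. l\<^sup>2 * Ind n l j \<omega> \<partial>M)" by simp
  also have "\<dots> \<le> (\<integral>\<omega>. (D n j \<omega>)\<^sup>2 * Ind n l j \<omega> + 2 * (Z \<omega> * D j m \<omega>) \<partial>M) - 2 * (\<integral>\<omega>. Z \<omega> * D j m \<omega> \<partial>M)"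
  proof -
    have "(\<integral>\<omega>. l\<^sup>2 * Ind n l j \<omega> \<partial>M) \<le> (\<integral>\<omega>. (D n j \<omega>)\<^sup>2 * Ind n l j \<omega> \<partial>M)"
    proof (rule integral_mono)
      show "integrable M (\<lambda>\<omega>. l\<^sup>2 * Ind n l j \<omega>)"
        using int_times_Ind[of "\<lambda>_. l\<^sup>2"] by (simp add: mult.commute)
      show "integrable M (\<lambda>\<omega>. (D n j \<omega>)\<^sup>2 * Ind n l j \<omega>)" by (rule i1)
      fix \<omega>
      show "l\<^sup>2 * Ind n l j \<omega> \<le> (D n j \<omega>)\<^sup>2 * Ind n l j \<omega>"
      proof (cases "Ind n l j \<omega> = 0")
        case False
        then have "l \<le> \<bar>D n j \<omega>\<bar>" "Ind n l j \<omega> = 1" unfolding Ind_def by (auto split: if_splits)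
        moreover have "l\<^sup>2 \<le> \<bar>D n j \<omega>\<bar>\<^sup>2" using calculation(1) l0 by (rule power_mono)
        ultimately show ?thesis by simp
      qed simp
    qed
    then show ?thesis using i1 i2 by simp
  qed
  also have "\<dots> = (\<integral>\<omega>. (D n j \<omega>)\<^sup>2 * Ind n l j \<omega> + 2 * (Z \<omega> * D j m \<omega>) \<partial>M)"
    using orthD[OF Zm Zi, of m] by simp
  also have "\<dots> \<le> (\<integral>\<omega>. (D n m \<omega>)\<^sup>2 * Ind n l j \<omega> \<partial>M)"
  proof (rule integral_mono)
    show "integrable M (\<lambda>\<omega>. (D n j \<omega>)\<^sup>2 * Ind n l j \<omega> + 2 * (Z \<omega> * D j m \<omega>))" using i1 i2 by auto
    show "integrable M (\<lambda>\<omega>. (D n m \<omega>)\<^sup>2 * Ind n l j \<omega>)" by (rule i3)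
    fix \<omega>
    have "(D n m \<omega>)\<^sup>2 * Ind n l j \<omega> = (D n j \<omega>)\<^sup>2 * Ind n l j \<omega> + 2 * (Z \<omega> * D j m \<omega>) + (D j m \<omega>)\<^sup>2 * Ind n l j \<omega>"
      unfolding Dsplit Z_def by (simp add: power2_eq_square algebra_simps)
    moreover have "(D j m \<omega>)\<^sup>2 * Ind n l j \<omega> \<ge> 0" unfolding Ind_def by auto
    ultimately show "(D n j \<omega>)\<^sup>2 * Ind n l j \<omega> + 2 * (Z \<omega> * D j m \<omega>) \<le> (D n m \<omega>)\<^sup>2 * Ind n l j \<omega>"
      by linarith
  qed
  finally show ?thesis .
qed

lemma Ind_sum_le1: "(\<Sum>j\<in>{n..m}. Ind n l j \<omega>) \<le> 1"
proof (cases "\<exists>j0\<in>{n..m}. Ind n l j0 \<omega> = 1")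
  case True
  then obtain j0 where j0: "j0 \<in> {n..m}" "Ind n l j0 \<omega> = 1" by auto
  have z: "Ind n l j \<omega> = 0" if "j \<in> {n..m} - {j0}" for j
  proof (rule ccontr)
    assume "Ind n l j \<omega> \<noteq> 0"
    then have j1: "l \<le> \<bar>D n j \<omega>\<bar>" "\<forall>i. n \<le> i \<and> i < j \<longrightarrow> \<bar>D n i \<omega>\<bar> < l"
      unfolding Ind_def by (auto split: if_splits)
    have j01: "l \<le> \<bar>D n j0 \<omega>\<bar>" "\<forall>i. n \<le> i \<and> i < j0 \<longrightarrow> \<bar>D n i \<omega>\<bar> < l"
      using j0(2) unfolding Ind_def by (auto split: if_splits)
    show False
    proof (cases "j < j0")
      case True then show False using j1(1) j01(2)[rule_format, of j] that by auto
    next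
      case False then have "j0 < j" using that by auto
      then show False using j1(2)[rule_format, of j0] j01(1) j0(1) by auto
    qed
  qed
  have "(\<Sum>j\<in>{n..m}. Ind n l j \<omega>) = Ind n l j0 \<omega> + (\<Sum>j\<in>{n..m} - {j0}. Ind n l j \<omega>)"
    using j0(1) by (simp add: sum.remove)
  also have "\<dots> = 1" using j0(2) z by simp
  finally show ?thesis by simp
next
  case False
  then have "\<forall>j\<in>{n..m}. Ind n l j \<omega> = 0" using Ind_01 by blast
  then show ?thesis by simp
qed

lemma Ind_sum_ge:
  assumes "\<exists>j\<in>{n..m}. l \<le> \<bar>D n j \<omega>\<bar>"
  shows "1 \<le> (\<Sum>j\<in>{n..m}. Ind n l j \<omega>)"
proof -
  define j0 where "j0 = (LEAST j. n \<le> j \<and> l \<le> \<bar>D n j \<omega>\<bar>)"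
  obtain j where j: "j \<in> {n..m}" "l \<le> \<bar>D n j \<omega>\<bar>" using assms by auto
  have P: "n \<le> j0 \<and> l \<le> \<bar>D n j0 \<omega>\<bar>" unfolding j0_def by (rule LeastI[of _ j]) (use j in auto)
  have "j0 \<le> j" unfolding j0_def by (rule Least_le) (use j in auto)
  then have j0m: "j0 \<in> {n..m}" using P j by auto
  have "\<forall>i. n \<le> i \<and> i < j0 \<longrightarrow> \<bar>D n i \<omega>\<bar> < l"
  proof (intro allI impI)
    fix i assume i: "n \<le> i \<and> i < j0"
    then have "\<not> (n \<le> i \<and> l \<le> \<bar>D n i \<omega>\<bar>)" unfolding j0_def by (rule not_less_Least[OF conjunct2])
    then show "\<bar>D n i \<omega>\<bar> < l" using i by auto
  qed
  then have "Ind n l j0 \<omega> = 1" using P unfolding Ind_def by auto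
  moreover have "Ind n l j0 \<omega> \<le> (\<Sum>j\<in>{n..m}. Ind n l j \<omega>)"
    by (rule member_le_sum) (use j0m in \<open>auto simp: Ind_def\<close>)
  ultimately show ?thesis by simp
qed

lemma kolmogorov:
  assumes nm: "n \<le> m" and l0: "0 \<le> l"
  shows "l\<^sup>2 * measure M {\<omega>\<in>space M. \<exists>j\<in>{n..m}. l \<le> \<bar>D n j \<omega>\<bar>} \<le> (\<integral>\<omega>. (D n m \<omega>)\<^sup>2 \<partial>M)"
proof -
  define B where "B = {\<omega>\<in>space M. \<exists>j\<in>{n..m}. l \<le> \<bar>D n j \<omega>\<bar>}"
  have Bm: "B \<in> sets M" unfolding B_def by measurable
  have iI: "integrable M (Ind n l j)" for j
    using int_times_Ind[of "\<lambda>_. 1" n l j] by simp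
  have "l\<^sup>2 * measure M B = (\<integral>\<omega>. l\<^sup>2 * indicator B \<omega> \<partial>M)"
    using Bm by simp
  also have "\<dots> \<le> (\<integral>\<omega>. (\<Sum>j\<in>{n..m}. l\<^sup>2 * Ind n l j \<omega>) \<partial>M)"
  proof (rule integral_mono)
    have "integrable M (indicator B :: 'a \<Rightarrow> real)" using Bm by (simp add: less_top[symmetric])
    then show "integrable M (\<lambda>\<omega>. l\<^sup>2 * indicator B \<omega>)" by simp
    show "integrable M (\<lambda>\<omega>. \<Sum>j\<in>{n..m}. l\<^sup>2 * Ind n l j \<omega>)" using iI by auto
    fix \<omega>
    show "l\<^sup>2 * indicator B \<omega> \<le> (\<Sum>j\<in>{n..m}. l\<^sup>2 * Ind n l j \<omega>)"
    proof (cases "\<omega> \<in> B")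
      case True
      then have "1 \<le> (\<Sum>j\<in>{n..m}. Ind n l j \<omega>)" unfolding B_def by (intro Ind_sum_ge) auto
      then have "l\<^sup>2 * 1 \<le> l\<^sup>2 * (\<Sum>j\<in>{n..m}. Ind n l j \<omega>)" by (intro mult_left_mono) auto
      then show ?thesis using True by (simp add: sum_distrib_left[symmetric])
    next
      case False
      have "0 \<le> (\<Sum>j\<in>{n..m}. l\<^sup>2 * Ind n l j \<omega>)" by (intro sum_nonneg) (auto simp: Ind_def)
      then show ?thesis using False by simp
    qed
  qed
  also have "\<dots> = (\<Sum>j\<in>{n..m}. l\<^sup>2 * (\<integral>\<omega>. Ind n l j \<omega> \<partial>M))"
    using iI by (simp add: Bochner_Integration.integral_sum)
  also have "\<dots> \<le> (\<Sum>j\<in>{n..m}. (\<integral>\<omega>. (D n m \<omega>)\<^sup>2 * Ind n l j \<omega> \<partial>M))"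
    by (rule sum_mono) (rule kol_step, use l0 in auto)
  also have "\<dots> = (\<integral>\<omega>. (\<Sum>j\<in>{n..m}. (D n m \<omega>)\<^sup>2 * Ind n l j \<omega>) \<partial>M)"
    by (rule Bochner_Integration.integral_sum[symmetric]) (rule int_times_Ind[OF _ D_int2], simp)
  also have "\<dots> = (\<integral>\<omega>. (D n m \<omega>)\<^sup>2 * (\<Sum>j\<in>{n..m}. Ind n l j \<omega>) \<partial>M)"
    by (simp add: sum_distrib_left)
  also have "\<dots> \<le> (\<integral>\<omega>. (D n m \<omega>)\<^sup>2 \<partial>M)"
  proof (rule integral_mono)
    have "integrable M (\<lambda>\<omega>. (\<Sum>j\<in>{n..m}. (D n m \<omega>)\<^sup>2 * Ind n l j \<omega>))"
      by (rule Bochner_Integration.integrable_sum) (rule int_times_Ind[OF _ D_int2], simp)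
    then show "integrable M (\<lambda>\<omega>. (D n m \<omega>)\<^sup>2 * (\<Sum>j\<in>{n..m}. Ind n l j \<omega>))"
      by (simp add: sum_distrib_left)
    show "integrable M (\<lambda>\<omega>. (D n m \<omega>)\<^sup>2)" by (rule D_int2)
    fix \<omega>
    have "(D n m \<omega>)\<^sup>2 * (\<Sum>j\<in>{n..m}. Ind n l j \<omega>) \<le> (D n m \<omega>)\<^sup>2 * 1"
      using Ind_sum_le1 by (intro mult_left_mono) auto
    then show "(D n m \<omega>)\<^sup>2 * (\<Sum>j\<in>{n..m}. Ind n l j \<omega>) \<le> (D n m \<omega>)\<^sup>2" by simp
  qed
  finally show ?thesis unfolding B_def .
qed

lemma tail_bound:
  assumes l0: "0 < l"
  shows "measure M {\<omega>\<in>space M. \<exists>j\<ge>n. l < \<bar>D n j \<omega>\<bar>} \<le> (\<Sum>i. w2 (i + n)) / l\<^sup>2"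
proof -
  define C where "C m = {\<omega>\<in>space M. \<exists>j\<in>{n..n+m}. l \<le> \<bar>D n j \<omega>\<bar>}" for m
  have "C m \<in> sets M" for m unfolding C_def by measurable
  then have Cs: "range C \<subseteq> sets M" by auto
  have Ci: "incseq C" unfolding C_def incseq_def by force
  have Cb: "measure M (C m) \<le> (\<Sum>i. w2 (i + n)) / l\<^sup>2" for m
  proof -
    have "l\<^sup>2 * measure M (C m) \<le> (\<integral>\<omega>. (D n (n+m) \<omega>)\<^sup>2 \<partial>M)"
      unfolding C_def using kolmogorov[of n "n+m" l] l0 by auto
    also have "\<dots> \<le> (\<Sum>i. w2 (i + n))" using D_sq_le[of n "n+m"] by auto
    finally show ?thesis using l0 by (simp add: field_simps mult.commute)
  qed
  have "(\<lambda>m. measure M (C m)) \<longlonglongrightarrow> measure M (\<Union>m. C m)"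
    by (rule finite_Lim_measure_incseq[OF Cs Ci])
  then have U: "measure M (\<Union>m. C m) \<le> (\<Sum>i. w2 (i + n)) / l\<^sup>2"
    by (rule tendsto_upperbound) (use Cb in auto)
  have "{\<omega>\<in>space M. \<exists>j\<ge>n. l < \<bar>D n j \<omega>\<bar>} \<subseteq> (\<Union>m. C m)"
  proof
    fix \<omega> assume "\<omega> \<in> {\<omega>\<in>space M. \<exists>j\<ge>n. l < \<bar>D n j \<omega>\<bar>}"
    then obtain j where "\<omega> \<in> space M" "j \<ge> n" "l < \<bar>D n j \<omega>\<bar>" by auto
    then have "\<omega> \<in> C (j - n)" unfolding C_def by (intro CollectI conjI bexI[of _ j]) auto
    then show "\<omega> \<in> (\<Union>m. C m)" by auto
  qed
  then have "measure M {\<omega>\<in>space M. \<exists>j\<ge>n. l < \<bar>D n j \<omega>\<bar>} \<le> measure M (\<Union>m. C m)"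
    using Cs by (intro finite_measure_mono) auto
  then show ?thesis using U by linarith
qed

lemma cauchy_event:
  assumes l0: "0 < l"
  shows "AE \<omega> in M. \<exists>n. \<forall>j\<ge>n. \<bar>D n j \<omega>\<bar> \<le> l"
proof (rule AE_I')
  define B where "B n = {\<omega>\<in>space M. \<exists>j\<ge>n. l < \<bar>D n j \<omega>\<bar>}" for n
  have Bs: "B n \<in> sets M" for n unfolding B_def by measurable
  have Ns: "(\<Inter>n. B n) \<in> sets M" using Bs by auto
  have "measure M (\<Inter>n. B n) \<le> 0"
  proof (rule field_le_epsilon)
    fix r :: real assume r: "r > 0"
    obtain n where n: "norm (\<Sum>i. w2 (i + n)) < r * l\<^sup>2"
      using suminf_exist_split[OF _ w2_summable, of "r * l\<^sup>2"] r l0 by auto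
    have "measure M (\<Inter>n. B n) \<le> measure M (B n)" using Bs by (intro finite_measure_mono) auto
    also have "\<dots> \<le> (\<Sum>i. w2 (i + n)) / l\<^sup>2" unfolding B_def by (rule tail_bound[OF l0])
    also have "\<dots> \<le> r" using n l0 by (simp add: field_simps)
    finally show "measure M (\<Inter>n. B n) \<le> 0 + r" by simp
  qed
  then have "measure M (\<Inter>n. B n) = 0" using measure_nonneg[of M "\<Inter>n. B n"] by linarith
  then show "(\<Inter>n. B n) \<in> null_sets M" using Ns by (simp add: emeasure_eq_measure null_sets_def)
  show "{\<omega> \<in> space M. \<not> (\<exists>n. \<forall>j\<ge>n. \<bar>D n j \<omega>\<bar> \<le> l)} \<subseteq> (\<Inter>n. B n)"
    unfolding B_def by (auto simp: not_le)
qed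

lemma Y_summable: "AE \<omega> in M. summable (\<lambda>k. Y k \<omega>)"
proof -
  have "AE \<omega> in M. \<forall>p::nat. \<exists>n. \<forall>j\<ge>n. \<bar>D n j \<omega>\<bar> \<le> 1 / (Suc p)"
    by (subst AE_all_countable) (intro allI cauchy_event, simp)
  then show ?thesis
  proof (rule AE_mp, intro AE_I2 impI)
    fix \<omega> assume H: "\<forall>p::nat. \<exists>n. \<forall>j\<ge>n. \<bar>D n j \<omega>\<bar> \<le> 1 / (Suc p)"
    define S where "S j = (\<Sum>k<j. Y k \<omega>)" for j
    have SD: "S j = S n + D n j \<omega>" if "n \<le> j" for n j
      unfolding S_def D_def using that
      by (simp add: lessThan_atLeast0 sum.atLeastLessThan_concat)
    have "Cauchy S"
    proof (rule metric_CauchyI)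
      fix e :: real assume e: "e > 0"
      obtain p :: nat where p: "inverse (real (Suc p)) < e / 2" using reals_Archimedean e
        by (metis half_gt_zero)
      obtain n where n: "\<forall>j\<ge>n. \<bar>D n j \<omega>\<bar> \<le> 1 / (Suc p)" using H by blast
      have "dist (S j) (S k) < e" if "j \<ge> n" "k \<ge> n" for j k
      proof -
        have "dist (S j) (S k) = \<bar>D n j \<omega> - D n k \<omega>\<bar>" using SD that by (simp add: dist_real_def)
        also have "\<dots> \<le> \<bar>D n j \<omega>\<bar> + \<bar>D n k \<omega>\<bar>" by linarith
        also have "\<dots> \<le> 2 / Suc p" using n[rule_format, OF that(1)] n[rule_format, OF that(2)] by (simp add: field_simps)
        also have "\<dots> < e" using p by (simp add: field_simps)
        finally show ?thesis .
      qed
      then show "\<exists>M. \<forall>m\<ge>M. \<forall>n\<ge>M. dist (S m) (S n) < e" by blast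
    qed
    then show "summable (\<lambda>k. Y k \<omega>)"
      unfolding summable_iff_convergent S_def[abs_def] using Cauchy_convergent_iff by blast
  qed
qed

lemma W2_summable: "AE \<omega> in M. summable (\<lambda>n. (W n \<omega>)\<^sup>2)"
proof -
  have "(\<integral>\<^sup>+ \<omega>. (\<Sum>n. ennreal ((W n \<omega>)\<^sup>2)) \<partial>M) = (\<Sum>n. \<integral>\<^sup>+ \<omega>. ennreal ((W n \<omega>)\<^sup>2) \<partial>M)"
    by (rule nn_integral_suminf) simp
  then have "(\<integral>\<^sup>+ \<omega>. (\<Sum>n. ennreal ((W n \<omega>)\<^sup>2)) \<partial>M) \<noteq> \<infinity>" using W_sq by simp
  then have "AE \<omega> in M. (\<Sum>n. ennreal ((W n \<omega>)\<^sup>2)) \<noteq> \<infinity>"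
    by (intro nn_integral_PInf_AE) auto
  then show ?thesis
    by (rule AE_mp) (intro AE_I2 impI summable_suminf_not_top, auto)
qed

end

theorem mainTheorem3:
  fixes M :: "'a measure"
    and F :: "nat \<Rightarrow> 'a measure"
    and X T W \<alpha> \<beta> \<gamma> :: "nat \<Rightarrow> 'a \<Rightarrow> real"
    and xs :: real
  assumes "prob_space M"
    and sub: "\<And>n. subalgebra M (F n)"
    and incr: "\<And>n. sets (F n) \<subseteq> sets (F (Suc n))"
    and X_meas: "\<And>n. X n \<in> borel_measurable (F n)"
    and T_meas: "\<And>n. T n \<in> borel_measurable (F n)"
    and W_meas: "\<And>n. W n \<in> borel_measurable (F (Suc n))"
    and rec: "\<And>n \<omega>. \<omega> \<in> space M \<Longrightarrow> X (Suc n) \<omega> = T n \<omega> + W n \<omega>"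
    and W_cond: "\<And>n. AE \<omega> in M. real_cond_exp M (F n) (W n) \<omega> = 0"
    and W_sq: "(\<Sum>n. \<integral>\<^sup>+ \<omega>. ennreal ((W n \<omega>)\<^sup>2) \<partial>M) < \<infinity>"
    and nonneg: "\<And>n \<omega>. \<omega> \<in> space M \<Longrightarrow> \<alpha> n \<omega> \<ge> 0 \<and> \<beta> n \<omega> \<ge> 0 \<and> \<gamma> n \<omega> \<ge> 0"
    and \<alpha>_lim: "AE \<omega> in M. (\<lambda>n. \<alpha> n \<omega>) \<longlonglongrightarrow> 0"
    and \<beta>_sum: "AE \<omega> in M. summable (\<lambda>n. \<beta> n \<omega>)"
    and \<gamma>_sum: "AE \<omega> in M. \<not> summable (\<lambda>n. \<gamma> n \<omega>)"
    and bound: "\<And>n \<omega>. \<omega> \<in> space M \<Longrightarrow>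
        \<bar>T n \<omega> - xs\<bar> \<le> max (\<alpha> n \<omega>) ((1 + \<beta> n \<omega> - \<gamma> n \<omega>) * \<bar>X n \<omega> - xs\<bar>)"
  shows "AE \<omega> in M. (\<lambda>n. X n \<omega>) \<longlonglongrightarrow> xs"
proof -
  interpret P: prob_space M by fact
  define a where "a p n \<omega> = (if 1 / real (Suc p) \<le> \<bar>T n \<omega> - xs\<bar> then sgn (T n \<omega> - xs) else 0)"
    for p n \<omega>
  have loc: "dvz M F W (a p)" for p
  proof (unfold_locales)
    show "subalgebra M (F n)" for n by (rule sub)
    show "sets (F n) \<subseteq> sets (F (Suc n))" for n by (rule incr)
    show "W n \<in> borel_measurable (F (Suc n))" for n by (rule W_meas)
    show "AE \<omega> in M. real_cond_exp M (F n) (W n) \<omega> = 0" for n by (rule W_cond)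
    show "(\<Sum>n. \<integral>\<^sup>+ \<omega>. ennreal ((W n \<omega>)\<^sup>2) \<partial>M) < \<infinity>" by (rule W_sq)
    show "a p n \<in> borel_measurable (F n)" for n
      unfolding a_def using T_meas[of n] by measurable
    show "\<bar>a p n \<omega>\<bar> \<le> 1" for n \<omega> unfolding a_def by (auto simp: sgn_if)
  qed
  have A1: "AE \<omega> in M. \<forall>p. summable (\<lambda>k. a p k \<omega> * W k \<omega>)"
    using dvz.Y_summable[OF loc] unfolding dvz.Y_def[OF loc] by (subst AE_all_countable) auto
  have A2: "AE \<omega> in M. summable (\<lambda>n. (W n \<omega>)\<^sup>2)" by (rule dvz.W2_summable[OF loc[of 0]])
  show ?thesis
    using A1 A2 \<alpha>_lim \<beta>_sum \<gamma>_sum AE_space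
  proof eventually_elim
    case (elim \<omega>)
    have fin: "\<exists>N. \<forall>n\<ge>N. \<bar>X n \<omega> - xs\<bar> \<le> 3 * (1 / real (Suc p))" for p
    proof (rule det_main[where t="\<lambda>n. T n \<omega>" and w="\<lambda>n. W n \<omega>" and \<alpha>="\<lambda>n. \<alpha> n \<omega>"
          and \<beta>="\<lambda>n. \<beta> n \<omega>" and \<gamma>="\<lambda>n. \<gamma> n \<omega>"])
      show "\<forall>n. X (Suc n) \<omega> = T n \<omega> + W n \<omega>" using rec elim by auto
      show "\<forall>n. \<bar>T n \<omega> - xs\<bar> \<le> max (\<alpha> n \<omega>) ((1 + \<beta> n \<omega> - \<gamma> n \<omega>) * \<bar>X n \<omega> - xs\<bar>)"
        using bound elim by auto
      show "\<forall>n. \<alpha> n \<omega> \<ge> 0 \<and> \<beta> n \<omega> \<ge> 0 \<and> \<gamma> n \<omega> \<ge> 0" using nonneg elim by auto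
      show "(\<lambda>n. \<alpha> n \<omega>) \<longlonglongrightarrow> 0" using elim by auto
      show "summable (\<lambda>n. \<beta> n \<omega>)" using elim by auto
      show "\<not> summable (\<lambda>n. \<gamma> n \<omega>)" using elim by auto
      show "summable (\<lambda>n. (W n \<omega>)\<^sup>2)" using elim by auto
      show "summable (\<lambda>n. (if 1 / real (Suc p) \<le> \<bar>T n \<omega> - xs\<bar> then sgn (T n \<omega> - xs) else 0) * W n \<omega>)"
        using elim(1) unfolding a_def by auto
      show "1 / real (Suc p) > 0" by simp
    qed
    show ?case
    proof (rule LIMSEQ_I)
      fix r :: real assume r: "0 < r"
      obtain p :: nat where p: "inverse (real (Suc p)) < r / 3" using reals_Archimedean r
        by (metis divide_pos_pos zero_less_numeral)
      obtain N where N: "\<forall>n\<ge>N. \<bar>X n \<omega> - xs\<bar> \<le> 3 * (1 / real (Suc p))" using fin by blast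
      have "\<forall>n\<ge>N. norm (X n \<omega> - xs) < r"
      proof (intro allI impI)
        fix n assume "n \<ge> N"
        then have "\<bar>X n \<omega> - xs\<bar> \<le> 3 * (1 / real (Suc p))" using N by auto
        also have "\<dots> < r" using p by (simp add: field_simps)
        finally show "norm (X n \<omega> - xs) < r" by simp
      qed
      then show "\<exists>no. \<forall>n\<ge>no. norm (X n \<omega> - xs) < r" by blast
    qed
  qed
qed

end
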